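(* Let $\mathcal X=\{X_1,\dots,X_n\}$, $n\in\mathbb N$, be a multi-set of real symmetric $2\times2$ matrices with $-\frac1{\sqrt2}I\le_{\mathrm L}X_i\le_{\mathrm L}\frac1{\sqrt2}I$ for all $i$. Then $-\frac1{\sqrt2}I\le_{\mathrm L}\mathrm{Sup}_{\mathrm{RLE}}(\mathcal X)\le_{\mathrm L}\frac1{\sqrt2}I$.
   Context: $A\le_{\mathrm L}B$ means $B-A$ is positive semidefinite; $I$ is the $2\times 2$ identity. $\mathrm{Sup}_{\mathrm{LE}}(\mathcal X):=\lim_{m\to\infty}\frac1m\log\sum_{i}\exp(mX_i)$. Write $X_i=\lambda_iu_iu_i^{\mathsf T}+\mu_iv_iv_i^{\mathsf T}$ (spectral form, $\lambda_i\ge\mu_i$, orthonormal $u_i,v_i$). The multi-set of bases $\{\{u_i,v_i\}\}_{i}$ is generic if for no $i\neq j$ the vector $u_i$ is aligned (equal up to sign) with $u_j$. Families $\mathcal X^{(\delta)}=\{X_1^{(\delta)},\dots,X_n^{(\delta)}\}$ converge planar to $\mathcal X$ if $X_i^{(\delta)}\to X_i$ as $\delta\to0$ and $X_i^{(\delta)}$ has the same eigenvalues as $X_i$ for all $i$ and $\delta$. The relaxed log-exp-supremum is $\mathrm{Sup}_{\mathrm{RLE}}(\mathcal X):=\mathrm{Sup}_{\mathrm{LE}}(\mathcal X)$ if the bases of $\mathcal X$ are generic, and otherwise $\mathrm{Sup}_{\mathrm{RLE}}(\mathcal X):=\lim_{\delta\to0}\mathrm{Sup}_{\mathrm{LE}}(\mathcal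 X^{(\delta)})$, where $\mathcal X^{(\delta)}$ converges planar to $\mathcal X$ and each $\mathcal X^{(\delta)}$ has generic bases (the limit being the same for all such families). *)

theory Defs
  imports "HOL-Analysis.Analysis"
begin

type_synonym mat2 = "real^2^2"

definition sym2 :: "mat2 \<Rightarrow> bool" where
  "sym2 A \<longleftrightarrow> transpose A = A"

definition outer2 :: "real^2 \<Rightarrow> real^2 \<Rightarrow> mat2" where
  "outer2 u v = (\<chi> i j. u $ i * v $ j)"

definition psd2 :: "mat2 \<Rightarrow> bool" where
  "psd2 M \<longleftrightarrow> sym2 M \<and> (\<forall>x. 0 \<le> x \<bullet> (M *v x))"

definition loewner_le :: "mat2 \<Rightarrow> mat2 \<Rightarrow> bool" where
  "loewner_le A B \<longleftrightarrow> psd2 (B - A)"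

definition spectral_form :: "mat2 \<Rightarrow> real \<Rightarrow> real \<Rightarrow> real^2 \<Rightarrow> real^2 \<Rightarrow> bool" where
  "spectral_form A l m u v \<longleftrightarrow> l \<ge> m \<and> norm u = 1 \<and> norm v = 1 \<and> u \<bullet> v = 0 \<and>
     A = l *\<^sub>R outer2 u u + m *\<^sub>R outer2 v v"

definition mat_fun :: "(real \<Rightarrow> real) \<Rightarrow> mat2 \<Rightarrow> mat2" where
  "mat_fun f A = (THE B. \<exists>l m u v. spectral_form A l m u v \<and>
        B = f l *\<^sub>R outer2 u u + f m *\<^sub>R outer2 v v)"

definition mat_exp :: "mat2 \<Rightarrow> mat2" where "mat_exp = mat_fun exp"
definition mat_log :: "mat2 \<Rightarrow> mat2" where "mat_log = mat_fun ln"

definition sup_LE :: "nat \<Rightarrow> (nat \<Rightarrow> mat2) \<Rightarrow> mat2" where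
  "sup_LE n X = lim (\<lambda>m::nat. (1 / real m) *\<^sub>R mat_log (\<Sum>i<n. mat_exp (real m *\<^sub>R X i)))"

definition aligned :: "real^2 \<Rightarrow> real^2 \<Rightarrow> bool" where
  "aligned u w \<longleftrightarrow> u = w \<or> u = - w"

definition generic_bases :: "nat \<Rightarrow> (nat \<Rightarrow> mat2) \<Rightarrow> bool" where
  "generic_bases n X \<longleftrightarrow> (\<exists>l m u v. (\<forall>i<n. spectral_form (X i) (l i) (m i) (u i) (v i)) \<and>
      (\<forall>i<n. \<forall>j<n. i \<noteq> j \<longrightarrow> \<not> aligned (u i) (u j)))"

definition same_eigenvalues :: "mat2 \<Rightarrow> mat2 \<Rightarrow> bool" where
  "same_eigenvalues A B \<longleftrightarrow>
     (\<forall>l m. (\<exists>u v. spectral_form A l m u v) \<longleftrightarrow> (\<exists>u v. spectral_form B l m u v))"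

definition converges_planar :: "nat \<Rightarrow> (real \<Rightarrow> nat \<Rightarrow> mat2) \<Rightarrow> (nat \<Rightarrow> mat2) \<Rightarrow> bool" where
  "converges_planar n XD X \<longleftrightarrow>
     (\<forall>i<n. ((\<lambda>d. XD d i) \<longlongrightarrow> X i) (at_right 0)) \<and>
     (\<forall>d>0. \<forall>i<n. same_eigenvalues (XD d i) (X i))"

definition sup_RLE :: "nat \<Rightarrow> (nat \<Rightarrow> mat2) \<Rightarrow> mat2" where
  "sup_RLE n X = (if generic_bases n X then sup_LE n X
     else (THE L. \<forall>XD. converges_planar n XD X \<and> (\<forall>d>0. generic_bases n (XD d)) \<longrightarrow>
                        ((\<lambda>d. sup_LE n (XD d)) \<longlongrightarrow> L) (at_right 0)))"

end

theory Submission
  imports Defs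
begin



lemma inner2: "(x::real^2) \<bullet> y = x$1*y$1 + x$2*y$2"
  by (simp add: inner_vec_def sum_2)
lemma outer2_nth[simp]: "outer2 u v $ i $ j = u$i * v$j"
  by (simp add: outer2_def)
lemma matvec2: "((M::mat2) *v x) $ i = M$i$1*x$1 + M$i$2*x$2"
  by (simp add: matrix_vector_mult_def sum_2)
lemma mat1_nth: "(mat 1 :: mat2) $ i $ j = (if i = j then 1 else 0)"
  by (simp add: mat_def)
lemma norm1_iff: "norm (u::real^2) = 1 \<longleftrightarrow> u$1^2 + u$2^2 = 1"
  by (simp add: norm_eq_sqrt_inner inner2 power2_eq_square)
lemma mat2_eq: "(A::mat2) = B \<longleftrightarrow> A$1$1 = B$1$1 \<and> A$1$2 = B$1$2 \<and> A$2$1 = B$2$1 \<and> A$2$2 = B$2$2"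
  by (auto simp: vec_eq_iff forall_2)
lemma vec2_eq: "(x::real^2) = y \<longleftrightarrow> x$1 = y$1 \<and> x$2 = y$2"
  by (auto simp: vec_eq_iff forall_2)

lemma on_basis:
  fixes a b c d :: real
  assumes h1: "a^2+b^2 = 1" and h2: "c^2+d^2=1" and h3: "a*c+b*d = 0"
  shows "a^2+c^2 = 1 \<and> b^2+d^2 = 1 \<and> a*b+c*d = 0"
proof -
  define D where "D = a*d-b*c"
  have e: "(a*c+b*d)^2 + D^2 = (a^2+b^2)*(c^2+d^2)" unfolding D_def by algebra
  hence D2: "D^2 = 1" using h1 h2 h3 by simp
  have c: "c = -b*D" 
  proof -
    have "c = c*(a^2+b^2)" using h1 by simp
    also have "\<dots> = a*(a*c+b*d) - b*D" unfolding D_def by algebra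
    finally show ?thesis using h3 by simp
  qed
  have d: "d = a*D"
  proof -
    have "d = d*(a^2+b^2)" using h1 by simp
    also have "\<dots> = b*(a*c+b*d) + a*D" unfolding D_def by algebra
    finally show ?thesis using h3 by simp
  qed
  show ?thesis using h1 D2 unfolding c d by algebra
qed

definition qf :: "mat2 \<Rightarrow> real^2 \<Rightarrow> real" where "qf M x = x \<bullet> (M *v x)"

lemma qf_add: "qf (A + B) x = qf A x + qf B x"
  by (simp add: qf_def matrix_vector_mult_add_rdistrib inner_add_right)
lemma qf_diff: "qf (A - B) x = qf A x - qf B x"
  by (simp add: qf_def matrix_vector_mult_diff_rdistrib inner_diff_right)
lemma qf_scale: "qf (c *\<^sub>R A) x = c * qf A x"
  by (simp add: qf_def flip: scaleR_matrix_vector_assoc)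
lemma qf_mat1: "qf (mat 1) x = x \<bullet> x"
  by (simp add: qf_def)
lemma qf_outer: "qf (outer2 u u) x = (u \<bullet> x)^2"
  by (simp add: qf_def inner2 matvec2 power2_eq_square algebra_simps)
lemma qf_sum: "qf (\<Sum>j\<in>A. f j) x = (\<Sum>j\<in>A. qf (f j) x)"
proof (induction A rule: infinite_finite_induct)
  case (infinite A) then show ?case by (simp add: qf_def)
next
  case empty then show ?case by (simp add: qf_def)
next
  case (insert a A) then show ?case by (simp add: qf_add)
qed

lemma ON_facts:
  assumes "norm (u::real^2) = 1" "norm v = 1" "u \<bullet> v = 0"
  shows "(u$1)^2 + (v$1)^2 = 1 \<and> (u$2)^2 + (v$2)^2 = 1 \<and> (u$1)*(u$2) + (v$1)*(v$2) = 0"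
  using on_basis[of "u$1" "u$2" "v$1" "v$2"] assms by (simp add: norm1_iff inner2)

lemma ON_sum:
  assumes "norm (u::real^2) = 1" "norm v = 1" "u \<bullet> v = 0"
  shows "outer2 u u + outer2 v v = mat 1"
  using ON_facts[OF assms] by (auto simp: mat2_eq mat1_nth power2_eq_square algebra_simps)

lemma ON_sq:
  assumes "norm (u::real^2) = 1" "norm v = 1" "u \<bullet> v = 0"
  shows "(u \<bullet> x)^2 + (v \<bullet> x)^2 = x \<bullet> x"
proof -
  have "(u \<bullet> x)^2 + (v \<bullet> x)^2 = qf (outer2 u u + outer2 v v) x" by (simp add: qf_add qf_outer)
  also have "\<dots> = x \<bullet> x" by (simp add: ON_sum[OF assms] qf_mat1)
  finally show ?thesis .
qed

lemma sf_ON: assumes "spectral_form A l m u v" shows "norm u = 1" "norm v = 1" "u \<bullet> v = 0"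
  using assms by (simp_all add: spectral_form_def)

lemma sf_alt:
  assumes "spectral_form A l m u v"
  shows "A = m *\<^sub>R mat 1 + (l - m) *\<^sub>R outer2 u u"
proof -
  have "A = l *\<^sub>R outer2 u u + m *\<^sub>R outer2 v v" using assms by (simp add: spectral_form_def)
  also have "outer2 v v = mat 1 - outer2 u u" using ON_sum[OF sf_ON[OF assms]] by (simp add: algebra_simps)
  finally show ?thesis by (simp add: algebra_simps)
qed

lemma sf_qf:
  assumes "spectral_form A l m u v"
  shows "qf A x = l * (u \<bullet> x)^2 + m * (v \<bullet> x)^2"
  using assms by (simp add: spectral_form_def qf_add qf_scale qf_outer)

lemma inner_self_norm1: "norm (u::real^2) = 1 \<Longrightarrow> u \<bullet> u = 1"
  by (simp add: power2_norm_eq_inner[symmetric])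

lemma sf_qf_bounds:
  assumes "spectral_form A l m u v" "norm x = 1"
  shows "m \<le> qf A x \<and> qf A x \<le> l"
proof -
  have s: "(u \<bullet> x)^2 + (v \<bullet> x)^2 = 1" using ON_sq[OF sf_ON[OF assms(1)]] inner_self_norm1[OF assms(2)] by simp
  have lm: "m \<le> l" using assms(1) by (simp add: spectral_form_def)
  have "qf A x = l * (u \<bullet> x)^2 + m * (v \<bullet> x)^2" by (rule sf_qf[OF assms(1)])
  moreover have "m * (u \<bullet> x)^2 \<le> l * (u \<bullet> x)^2" "m * (v \<bullet> x)^2 \<le> l * (v \<bullet> x)^2"
    using lm by (simp_all add: mult_right_mono)
  ultimately show ?thesis using s by (smt (verit) distrib_left mult.commute mult_cancel_left1)
qed

lemma sf_qf_u: assumes "spectral_form A l m u v" shows "qf A u = l"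
  using sf_qf[OF assms, of u] sf_ON[OF assms] inner_self_norm1[of u] by (simp add: inner_commute)
lemma sf_qf_v: assumes "spectral_form A l m u v" shows "qf A v = m"
  using sf_qf[OF assms, of v] sf_ON[OF assms] inner_self_norm1[of v] by (simp add: inner_commute)

lemma sf_eig_unique:
  assumes "spectral_form A l m u v" "spectral_form A l' m' u' v'"
  shows "l = l' \<and> m = m'"
proof -
  have "l \<le> l'" using sf_qf_bounds[OF assms(2), of u] sf_qf_u[OF assms(1)] assms(1) by (simp add: spectral_form_def)
  moreover have "l' \<le> l" using sf_qf_bounds[OF assms(1), of u'] sf_qf_u[OF assms(2)] assms(2) by (simp add: spectral_form_def)
  moreover have "m' \<le> m" using sf_qf_bounds[OF assms(2), of v] sf_qf_v[OF assms(1)] assms(1) by (simp add: spectral_form_def)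
  moreover have "m \<le> m'" using sf_qf_bounds[OF assms(1), of v'] sf_qf_v[OF assms(2)] assms(2) by (simp add: spectral_form_def)
  ultimately show ?thesis by simp
qed

lemma sf_fun_val:
  assumes "spectral_form A l m u v"
  shows "f l *\<^sub>R outer2 u u + f m *\<^sub>R outer2 v v = f m *\<^sub>R mat 1 + (f l - f m) *\<^sub>R outer2 u u"
proof -
  have "outer2 v v = mat 1 - outer2 u u" using ON_sum[OF sf_ON[OF assms]] by (simp add: algebra_simps)
  then have "f l *\<^sub>R outer2 u u + f m *\<^sub>R outer2 v v = f l *\<^sub>R outer2 u u + f m *\<^sub>R (mat 1 - outer2 u u)"
    by simp
  also have "\<dots> = f m *\<^sub>R mat 1 + (f l - f m) *\<^sub>R outer2 u u" by (simp add: algebra_simps)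
  finally show ?thesis .
qed

lemma sf_outer_u:
  assumes "spectral_form A l m u v" "l \<noteq> m"
  shows "outer2 u u = (1/(l-m)) *\<^sub>R (A - m *\<^sub>R mat 1)"
  using sf_alt[OF assms(1)] assms(2) by simp

lemma mat_fun_sf:
  assumes "spectral_form A l m u v"
  shows "mat_fun f A = f l *\<^sub>R outer2 u u + f m *\<^sub>R outer2 v v"
  unfolding mat_fun_def
proof (rule the_equality)
  show "\<exists>l' m' u' v'. spectral_form A l' m' u' v' \<and> f l *\<^sub>R outer2 u u + f m *\<^sub>R outer2 v v =
      f l' *\<^sub>R outer2 u' u' + f m' *\<^sub>R outer2 v' v'" using assms by blast
next
  fix B assume "\<exists>l' m' u' v'. spectral_form A l' m' u' v' \<and> B = f l' *\<^sub>R outer2 u' u' + f m' *\<^sub>R outer2 v' v'"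
  then obtain l' m' u' v' where h: "spectral_form A l' m' u' v'" "B = f l' *\<^sub>R outer2 u' u' + f m' *\<^sub>R outer2 v' v'"
    by blast
  have e: "l' = l" "m' = m" using sf_eig_unique[OF assms h(1)] by auto
  show "B = f l *\<^sub>R outer2 u u + f m *\<^sub>R outer2 v v"
  proof (cases "l = m")
    case True
    then show ?thesis using h(2) e sf_fun_val[OF assms, of f] sf_fun_val[OF h(1), of f] by simp
  next
    case False
    then have "outer2 u' u' = outer2 u u" using sf_outer_u[OF assms] sf_outer_u[OF h(1)] e by simp
    then show ?thesis using h(2) e sf_fun_val[OF assms, of f] sf_fun_val[OF h(1), of f] by simp
  qed
qed




lemma sym2_entries: assumes "sym2 A" shows "A$2$1 = A$1$2"
proof -
  have "transpose A $ 2 $ 1 = A $ 1 $ 2" by (simp add: transpose_def)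
  then show ?thesis using assms unfolding sym2_def by simp
qed

lemma sym2_iff: "sym2 (A::mat2) \<longleftrightarrow> A$2$1 = A$1$2"
proof
  assume "A$2$1 = A$1$2"
  then show "sym2 A" unfolding sym2_def by (auto simp: mat2_eq transpose_def)
qed (rule sym2_entries)

lemma spectral_exists:
  assumes "sym2 A"
  shows "\<exists>l m u v. spectral_form A l m u v"
proof -
  define p where "p = A$1$1"
  define q where "q = A$1$2"
  define r where "r = A$2$2"
  have A21: "A$2$1 = q" using sym2_entries[OF assms] q_def by simp
  define D where "D = sqrt ((p-r)^2 + 4*q^2)"
  show ?thesis
  proof (cases "D = 0")
    case True
    then have "(p-r)^2 + 4*q^2 = 0" unfolding D_def by simp
    moreover have "(p-r)^2 \<ge> 0" "q^2 \<ge> 0" by simp_all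
    ultimately have "(p-r)^2 = 0" "q^2 = 0" by linarith+
    then have pr: "p = r" and q0: "q = 0" by simp_all
    let ?u = "vector [1, 0] :: real^2" and ?v = "vector [0, 1] :: real^2"
    have "spectral_form A p p ?u ?v"
      unfolding spectral_form_def
      using pr q0 A21 by (simp add: norm1_iff inner2 mat2_eq p_def q_def r_def)
    then show ?thesis by blast
  next
    case False
    have "(p-r)^2 + 4*q^2 \<ge> 0" by simp
    then have Dpos: "D > 0" using False unfolding D_def by (simp add: order_neq_le_trans)
    have D2: "D^2 = (p-r)^2 + 4*q^2" unfolding D_def by simp
    define C where "C = (p-r)/D"
    define S where "S = 2*q/D"
    have CS: "C^2 + S^2 = 1" using D2 Dpos unfolding C_def S_def by (simp add: field_simps power2_eq_square)
    have C2: "C^2 \<le> 1" using CS zero_le_power2[of S] by linarith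
    have Cle1: "C \<le> 1" and Cge: "-1 \<le> C" using C2 abs_square_le_1[of C] by auto
    define sg where "sg = (if q \<ge> 0 then 1 else -1::real)"
    have sg2: "sg^2 = 1" unfolding sg_def by simp
    define a where "a = sqrt ((1+C)/2)"
    define b where "b = sg * sqrt ((1-C)/2)"
    have a2: "a^2 = (1+C)/2" unfolding a_def using Cge by simp
    have b2: "b^2 = (1-C)/2" unfolding b_def power_mult_distrib sg2 using Cle1 by simp
    have ab: "a*b = S/2"
    proof -
      have "a*b = sg * (sqrt ((1+C)/2) * sqrt ((1-C)/2))" unfolding a_def b_def by (simp only: mult_ac)
      also have "sqrt ((1+C)/2) * sqrt ((1-C)/2) = sqrt ((1+C)/2 * ((1-C)/2))" by (rule real_sqrt_mult[symmetric])
      also have "(1+C)/2 * ((1-C)/2) = (S/2)^2" using CS by (simp add: field_simps power2_eq_square)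
      also have "sqrt ((S/2)^2) = \<bar>S\<bar>/2" by simp
      also have "sg * (\<bar>S\<bar>/2) = S/2"
      proof (cases "q \<ge> 0")
        case True
        then have "S \<ge> 0" unfolding S_def using Dpos by simp
        then show ?thesis using True unfolding sg_def by simp
      next
        case False
        then have "S < 0" unfolding S_def using Dpos by (simp add: divide_neg_pos)
        then show ?thesis using False unfolding sg_def by simp
      qed
      finally show ?thesis .
    qed
    let ?u = "vector [a, b] :: real^2" and ?v = "vector [-b, a] :: real^2"
    let ?l = "(p+r+D)/2" and ?m = "(p+r-D)/2"
    have "spectral_form A ?l ?m ?u ?v"
      unfolding spectral_form_def
    proof (intro conjI)
      show "?m \<le> ?l" using Dpos by simp
      show "norm ?u = 1" "norm ?v = 1" using a2 b2 by (simp_all add: norm1_iff)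
      show "?u \<bullet> ?v = 0" by (simp add: inner2)
      have DC: "D*C = p-r" using Dpos unfolding C_def by simp
      have DS: "D*S = 2*q" using Dpos unfolding S_def by simp
      have e11: "?l * (a*a) + ?m * ((-b)*(-b)) = p"
      proof -
        have "?l * (a*a) + ?m * ((-b)*(-b)) = ?l * a^2 + ?m * b^2" by (simp add: power2_eq_square)
        also have "\<dots> = (p+r)/2 + (D*C)/2" unfolding a2 b2 by (simp add: field_simps)
        also have "\<dots> = p" unfolding DC by (simp add: field_simps)
        finally show ?thesis .
      qed
      have e22: "?l * (b*b) + ?m * (a*a) = r"
      proof -
        have "?l * (b*b) + ?m * (a*a) = ?l * b^2 + ?m * a^2" by (simp add: power2_eq_square)
        also have "\<dots> = (p+r)/2 - (D*C)/2" unfolding a2 b2 by (simp add: field_simps)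
        also have "\<dots> = r" unfolding DC by (simp add: field_simps)
        finally show ?thesis .
      qed
      have e12: "?l * (a*b) + ?m * ((-b)*a) = q"
      proof -
        have gen: "\<And>L M x y::real. L*(x*y) + M*((-y)*x) = (L-M)*(x*y)" by (simp add: algebra_simps)
        have "?l * (a*b) + ?m * ((-b)*a) = (?l - ?m) * (a*b)" by (rule gen)
        also have "?l - ?m = D" by (simp add: field_simps)
        also have "D * (a*b) = (D*S)/2" unfolding ab by simp
        also have "\<dots> = q" unfolding DS by simp
        finally show ?thesis .
      qed
      have e21: "?l * (b*a) + ?m * (a*(-b)) = q" using e12 by (simp add: mult.commute)
      show "A = ?l *\<^sub>R outer2 ?u ?u + ?m *\<^sub>R outer2 ?v ?v"
        unfolding mat2_eq
        using e11 e22 e12 e21 A21 by (simp add: p_def q_def r_def)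
    qed
    then show ?thesis by blast
  qed
qed



lemma sf_scale:
  assumes "spectral_form A l m u v" "c \<ge> 0"
  shows "spectral_form (c *\<^sub>R A) (c*l) (c*m) u v"
  using assms by (auto simp: spectral_form_def mult_left_mono algebra_simps)

lemma mat_exp_sf:
  assumes "spectral_form A l m u v" "c \<ge> 0"
  shows "mat_exp (c *\<^sub>R A) = exp (c*l) *\<^sub>R outer2 u u + exp (c*m) *\<^sub>R outer2 v v"
  unfolding mat_exp_def by (rule mat_fun_sf[OF sf_scale[OF assms]])

lemma sym2_add: "sym2 A \<Longrightarrow> sym2 B \<Longrightarrow> sym2 (A + B)" by (simp add: sym2_iff)
lemma sym2_diff: "sym2 A \<Longrightarrow> sym2 B \<Longrightarrow> sym2 (A - B)" by (simp add: sym2_iff)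
lemma sym2_scale: "sym2 A \<Longrightarrow> sym2 (c *\<^sub>R A)" by (simp add: sym2_iff)
lemma sym2_outer: "sym2 (outer2 u u)" by (simp add: sym2_iff)
lemma sym2_mat1: "sym2 (mat 1)" by (simp add: sym2_iff mat1_nth)
lemma sym2_sum: "(\<And>j. j \<in> A \<Longrightarrow> sym2 (f j)) \<Longrightarrow> sym2 (\<Sum>j\<in>A. f j)"
  by (simp add: sym2_iff sum_component)

lemma sf_trace:
  assumes "spectral_form A l m u v"
  shows "qf A (vector [1,0]) + qf A (vector [0,1]) = l + m"
proof -
  have "(u$1)^2 + (u$2)^2 = 1" "(v$1)^2 + (v$2)^2 = 1" using sf_ON[OF assms] by (simp_all add: norm1_iff)
  moreover have "qf A (vector [1,0]) + qf A (vector [0,1]) = l*((u$1)^2+(u$2)^2) + m*((v$1)^2+(v$2)^2)"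
    using sf_qf[OF assms] by (simp add: inner2 algebra_simps)
  ultimately show ?thesis by simp
qed

lemma norm_vec10: "norm (vector [1,0] :: real^2) = 1" and norm_vec01: "norm (vector [0,1] :: real^2) = 1"
  by (simp_all add: norm1_iff)

lemma cross_bound:
  fixes u w x :: "real^2"
  assumes "norm u = 1" "norm w = 1" "norm x = 1"
  shows "(u$1*w$2 - u$2*w$1)^2 / 2 \<le> (u \<bullet> x)^2 + (w \<bullet> x)^2"
proof -
  define a where "a = u$1" define b where "b = u$2" define c where "c = w$1" define d where "d = w$2"
  define p where "p = x$1" define q where "q = x$2"
  have n: "a^2+b^2 = 1" "c^2+d^2 = 1" "p^2+q^2 = 1" using assms by (simp_all add: norm1_iff a_def b_def c_def d_def p_def q_def)
  define A where "A = a*p+b*q" define C where "C = c*p+d*q"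
  have e1: "(a*d-b*c)*p = d*A - b*C" unfolding A_def C_def by algebra
  have e2: "(a*d-b*c)*q = a*C - c*A" unfolding A_def C_def by algebra
  have "(a*d-b*c)^2 = (a*d-b*c)^2*(p^2+q^2)" using n by simp
  also have "\<dots> = ((a*d-b*c)*p)^2 + ((a*d-b*c)*q)^2" by algebra
  also have "\<dots> = (d*A - b*C)^2 + (a*C - c*A)^2" unfolding e1 e2 ..
  finally have eq: "(a*d-b*c)^2 = (d*A - b*C)^2 + (a*C - c*A)^2" .
  have "(d^2+b^2)*(A^2+C^2) = (d*A - b*C)^2 + (d*C + b*A)^2" by algebra
  then have i1: "(d*A - b*C)^2 \<le> (d^2+b^2)*(A^2+C^2)" by simp
  have "(a^2+c^2)*(A^2+C^2) = (a*C - c*A)^2 + (a*A + c*C)^2" by algebra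
  then have i2: "(a*C - c*A)^2 \<le> (a^2+c^2)*(A^2+C^2)" by simp
  have "(d^2+b^2)*(A^2+C^2) + (a^2+c^2)*(A^2+C^2) = (a^2+b^2+c^2+d^2)*(A^2+C^2)" by algebra
  then have "(a*d-b*c)^2 \<le> (a^2+b^2+c^2+d^2)*(A^2+C^2)" using eq i1 i2 by linarith
  moreover have "a^2+b^2+c^2+d^2 = 2" using n by simp
  ultimately have "(a*d-b*c)^2 \<le> 2*(A^2+C^2)" by simp
  then have "(a*d-b*c)^2/2 \<le> A^2+C^2" by simp
  moreover have "u \<bullet> x = A" "w \<bullet> x = C" unfolding A_def C_def a_def b_def c_def d_def p_def q_def inner2 by simp_all
  ultimately show ?thesis unfolding a_def b_def c_def d_def by simp
qed

lemma nonaligned_cross: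
  fixes u w :: "real^2"
  assumes "norm u = 1" "norm w = 1" "\<not> aligned u w"
  shows "u$1*w$2 - u$2*w$1 \<noteq> 0"
proof
  assume h: "u$1*w$2 - u$2*w$1 = 0"
  define a where "a = u$1" define b where "b = u$2" define c where "c = w$1" define d where "d = w$2"
  have n: "a^2+b^2 = 1" "c^2+d^2 = 1" using assms(1,2) by (simp_all add: norm1_iff a_def b_def c_def d_def)
  have h': "a*d - b*c = 0" using h by (simp add: a_def b_def c_def d_def)
  define t where "t = a*c+b*d"
  have "t^2 + (a*d - b*c)^2 = (a^2+b^2)*(c^2+d^2)" unfolding t_def by algebra
  then have s2: "t^2 = 1" using h' n by simp
  have "(a - t*c)^2 + (b - t*d)^2 = (a^2+b^2) - 2*t*t + (t^2)*(c^2+d^2)" unfolding t_def by algebra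
  also have "\<dots> = 0" using s2 n by (simp add: power2_eq_square)
  finally have "a = t*c \<and> b = t*d" by (simp add: sum_power2_eq_zero_iff)
  moreover have "t = 1 \<or> t = -1" using s2 by (simp add: power2_eq_1_iff)
  ultimately have "aligned u w" unfolding aligned_def by (auto simp: vec2_eq a_def b_def c_def d_def)
  with assms(3) show False by simp
qed

lemma exp_neg_lim:
  assumes "a < 0"
  shows "(\<lambda>k::nat. exp (real k * a)) \<longlonglongrightarrow> 0"
proof -
  have "(\<lambda>k::nat. exp a ^ k) \<longlonglongrightarrow> 0" using assms by (intro LIMSEQ_power_zero) simp
  then show ?thesis by (simp add: exp_of_nat_mult)
qed

lemma log_squeeze:
  fixes s :: "nat \<Rightarrow> real"
  assumes "c1 > 0" "c2 > 0" "\<And>k. c1 * exp (real k * L) \<le> s k" "\<And>k. s k \<le> c2 * exp (real k * L)"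
  shows "(\<lambda>k. ln (s k) / real k) \<longlonglongrightarrow> L"
proof (rule tendsto_sandwich)
  have sp: "s k > 0" for k
  proof -
    have "c1 * exp (real k * L) > 0" using assms(1) by simp
    then show ?thesis using assms(3)[of k] by linarith
  qed
  show "\<forall>\<^sub>F k in sequentially. L + ln c1 * (1 / real k) \<le> ln (s k) / real k"
    using eventually_gt_at_top[of 0]
  proof eventually_elim
    case (elim k)
    have "ln (c1 * exp (real k * L)) \<le> ln (s k)" using assms(1,3) sp by simp
    then have "ln c1 + real k * L \<le> ln (s k)" using assms(1) by (simp add: ln_mult)
    then have "(ln c1 + real k * L) / real k \<le> ln (s k) / real k" by (rule divide_right_mono) simp
    moreover have "L + ln c1 * (1 / real k) = (ln c1 + real k * L) / real k" using elim by (simp add: field_simps)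
    ultimately show ?case by simp
  qed
  show "\<forall>\<^sub>F k in sequentially. ln (s k) / real k \<le> L + ln c2 * (1 / real k)"
    using eventually_gt_at_top[of 0]
  proof eventually_elim
    case (elim k)
    have "ln (s k) \<le> ln (c2 * exp (real k * L))" using assms(2,4) sp by simp
    then have "ln (s k) \<le> ln c2 + real k * L" using assms(2) by (simp add: ln_mult)
    then have "ln (s k) / real k \<le> (ln c2 + real k * L) / real k" by (rule divide_right_mono) simp
    moreover have "L + ln c2 * (1 / real k) = (ln c2 + real k * L) / real k" using elim by (simp add: field_simps)
    ultimately show ?case by simp
  qed
  show "(\<lambda>k. L + ln c1 * (1 / real k)) \<longlonglongrightarrow> L"
    using tendsto_add[OF tendsto_const tendsto_mult[OF tendsto_const lim_inverse_n']] by simp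
  show "(\<lambda>k. L + ln c2 * (1 / real k)) \<longlonglongrightarrow> L"
    using tendsto_add[OF tendsto_const tendsto_mult[OF tendsto_const lim_inverse_n']] by simp
qed

lemma bounded_null_outer:
  assumes a: "(a \<longlongrightarrow> 0) F" and w: "\<And>k. norm ((w k)::real^2) = 1"
  shows "((\<lambda>k. a k *\<^sub>R outer2 (w k) (w k)) \<longlongrightarrow> 0) F"
proof (intro vec_tendstoI)
  fix i j :: 2
  have b: "\<bar>w k $ i * w k $ j\<bar> \<le> 1" for k
  proof -
    have "\<bar>w k $ i\<bar> \<le> 1" "\<bar>w k $ j\<bar> \<le> 1" using component_le_norm_cart[of "w k"] w[of k] by metis+
    then show ?thesis by (simp add: abs_mult mult_le_one)
  qed
  have "((\<lambda>k. a k * (w k $ i * w k $ j)) \<longlongrightarrow> 0) F"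
  proof (rule tendsto_sandwich[where f = "\<lambda>k. - \<bar>a k\<bar>" and h = "\<lambda>k. \<bar>a k\<bar>"])
    have bb: "\<bar>a k * (w k $ i * w k $ j)\<bar> \<le> \<bar>a k\<bar>" for k
      using mult_left_le[OF b[of k], of "\<bar>a k\<bar>"] by (simp only: abs_mult[of "a k"])
    show "\<forall>\<^sub>F k in F. - \<bar>a k\<bar> \<le> a k * (w k $ i * w k $ j)"
      using bb by (intro always_eventually allI) (metis abs_le_iff minus_le_iff)
    show "\<forall>\<^sub>F k in F. a k * (w k $ i * w k $ j) \<le> \<bar>a k\<bar>"
      using bb by (intro always_eventually allI) (metis abs_le_iff)
    show "((\<lambda>k. - \<bar>a k\<bar>) \<longlongrightarrow> 0) F" using tendsto_minus[OF tendsto_rabs[OF a]] by simp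
    show "((\<lambda>k. \<bar>a k\<bar>) \<longlongrightarrow> 0) F" using tendsto_rabs[OF a] by simp
  qed
  then show "((\<lambda>k. (a k *\<^sub>R outer2 (w k) (w k)) $ i $ j) \<longlongrightarrow> (0::mat2) $ i $ j) F" by simp
qed




definition Lam :: "(nat \<Rightarrow> real) \<Rightarrow> nat \<Rightarrow> real" where "Lam l n = Max (l ` {..<n})"
definition idx :: "(nat \<Rightarrow> real) \<Rightarrow> nat \<Rightarrow> nat" where "idx l n = (LEAST j. j < n \<and> l j = Lam l n)"
definition nu :: "(nat \<Rightarrow> real) \<Rightarrow> (nat \<Rightarrow> real) \<Rightarrow> nat \<Rightarrow> real" where
  "nu l m n = Max (insert (m (idx l n)) (l ` ({..<n} - {idx l n})))"
definition Gf :: "(nat \<Rightarrow> real) \<Rightarrow> (nat \<Rightarrow> real) \<Rightarrow> nat \<Rightarrow> (nat \<Rightarrow> mat2) \<Rightarrow> mat2" where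
  "Gf l m n Y = nu l m n *\<^sub>R mat 1 + ((Lam l n - nu l m n) / (l (idx l n) - m (idx l n))) *\<^sub>R
      (Y (idx l n) - m (idx l n) *\<^sub>R mat 1)"

lemma Lam_facts:
  assumes "n > 0"
  shows "idx l n < n" "l (idx l n) = Lam l n" "\<And>j. j < n \<Longrightarrow> l j \<le> Lam l n"
proof -
  have "Lam l n \<in> l ` {..<n}" unfolding Lam_def using assms by (intro Max_in) auto
  then obtain j where j: "j < n" "l j = Lam l n" by auto
  have "idx l n < n \<and> l (idx l n) = Lam l n" unfolding idx_def by (rule LeastI[of _ j]) (use j in auto)
  then show "idx l n < n" "l (idx l n) = Lam l n" by auto
  show "\<And>j. j < n \<Longrightarrow> l j \<le> Lam l n" unfolding Lam_def by (intro Max_ge) auto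
qed

lemma nu_facts:
  assumes "n > 0" "\<And>j. j < n \<Longrightarrow> m j \<le> l j"
  shows "m (idx l n) \<le> nu l m n" "\<And>j. j < n \<Longrightarrow> j \<noteq> idx l n \<Longrightarrow> l j \<le> nu l m n"
    "nu l m n \<le> Lam l n"
    "nu l m n = m (idx l n) \<or> (\<exists>j<n. j \<noteq> idx l n \<and> l j = nu l m n)"
proof -
  let ?A = "insert (m (idx l n)) (l ` ({..<n} - {idx l n}))"
  have f: "finite ?A" by simp
  show "m (idx l n) \<le> nu l m n" unfolding nu_def by (rule Max_ge[OF f]) simp
  show "\<And>j. j < n \<Longrightarrow> j \<noteq> idx l n \<Longrightarrow> l j \<le> nu l m n" unfolding nu_def by (rule Max_ge[OF f]) auto
  have "nu l m n \<in> ?A" unfolding nu_def by (rule Max_in[OF f]) simp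
  then show "nu l m n = m (idx l n) \<or> (\<exists>j<n. j \<noteq> idx l n \<and> l j = nu l m n)" by auto
  then show "nu l m n \<le> Lam l n" using Lam_facts[OF assms(1), where l=l] assms(2) by fastforce
qed




lemma Gf_alt:
  assumes "spectral_form (Y i) (l i) (m i) (u i) (v i)" "i = idx l n"
    "l i = Lam l n" "m i \<le> nu l m n" "nu l m n \<le> Lam l n"
  shows "Gf l m n Y = nu l m n *\<^sub>R mat 1 + (Lam l n - nu l m n) *\<^sub>R outer2 (u i) (u i)"
proof (cases "l i = m i")
  case True
  then have "nu l m n = Lam l n" using assms by linarith
  then show ?thesis unfolding Gf_def using True assms(2) by simp
next
  case False
  have "Y i - m i *\<^sub>R mat 1 = (l i - m i) *\<^sub>R outer2 (u i) (u i)" using sf_alt[OF assms(1)] by simp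
  then show ?thesis unfolding Gf_def using False assms(2) by simp
qed

lemma main_generic:
  assumes n: "n > 0"
    and sf: "\<forall>j<n. spectral_form (Y j) (l j) (m j) (u j) (v j)"
    and gen: "\<forall>i<n. \<forall>j<n. i \<noteq> j \<longrightarrow> \<not> aligned (u i) (u j)"
  shows "((\<lambda>k::nat. (1 / real k) *\<^sub>R mat_log (\<Sum>j<n. mat_exp (real k *\<^sub>R Y j))) \<longlongrightarrow> Gf l m n Y) sequentially"
proof -
  define i where "i = idx l n"
  define \<Lambda> where "\<Lambda> = Lam l n"
  define \<nu> where "\<nu> = nu l m n"
  have mle: "\<And>j. j < n \<Longrightarrow> m j \<le> l j" using sf by (simp add: spectral_form_def)
  have i_lt: "i < n" and li: "l i = \<Lambda>" and lj: "\<And>j. j < n \<Longrightarrow> l j \<le> \<Lambda>"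
    using Lam_facts[OF n, where l=l] unfolding i_def \<Lambda>_def by auto
  have mi: "m i \<le> \<nu>" and lnu: "\<And>j. j < n \<Longrightarrow> j \<noteq> i \<Longrightarrow> l j \<le> \<nu>" and nuL: "\<nu> \<le> \<Lambda>"
    and nucase: "\<nu> = m i \<or> (\<exists>j<n. j \<noteq> i \<and> l j = \<nu>)"
    using nu_facts[OF n, where m=m and l=l] mle unfolding i_def \<Lambda>_def \<nu>_def by auto
  have sfi: "spectral_form (Y i) (l i) (m i) (u i) (v i)" using sf i_lt by simp
  have G: "Gf l m n Y = \<nu> *\<^sub>R mat 1 + (\<Lambda> - \<nu>) *\<^sub>R outer2 (u i) (u i)"
    unfolding \<nu>_def \<Lambda>_def by (rule Gf_alt[where Y=Y and l=l and m=m and u=u and v=v and i=i and n=n, OF sfi]) (use i_def li mi nuL \<Lambda>_def \<nu>_def in auto)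
  define E where "E = (\<lambda>k j. exp (real k * l j) *\<^sub>R outer2 (u j) (u j) + exp (real k * m j) *\<^sub>R outer2 (v j) (v j))"
  define S where "S = (\<lambda>k. \<Sum>j<n. E k j)"
  have SE: "(\<Sum>j<n. mat_exp (real k *\<^sub>R Y j)) = S k" for k
    unfolding S_def E_def by (intro sum.cong refl) (use mat_exp_sf sf in auto)
  have sfE: "spectral_form (E k j) (exp (real k * l j)) (exp (real k * m j)) (u j) (v j)" if "j < n" for k j
    using sf that unfolding E_def spectral_form_def by (auto simp: mult_left_mono)
  have symS: "sym2 (S k)" for k unfolding S_def E_def
    by (intro sym2_sum sym2_add sym2_scale sym2_outer)
  have "\<forall>k. \<exists>a b w w'. spectral_form (S k) a b w w'" using spectral_exists[OF symS] by blast
  then obtain s1 s2 w w' where sfS: "\<And>k. spectral_form (S k) (s1 k) (s2 k) (w k) (w' k)" by metis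
  have qfS: "qf (S k) x = (\<Sum>j<n. qf (E k j) x)" for k x unfolding S_def by (rule qf_sum)
  have qfE_nonneg: "qf (E k j) x \<ge> 0" if "j < n" for k j x
    using sf_qf[OF sfE[OF that]] by simp
  have qfE_lb: "qf (E k j) x \<ge> exp (real k * l j) * (u j \<bullet> x)^2" if "j < n" for k j x
    using sf_qf[OF sfE[OF that]] by simp
  have qfE_ub: "qf (E k j) x \<le> exp (real k * l j)" if "j < n" "norm x = 1" for k j x
    using sf_qf_bounds[OF sfE[OF that(1)] that(2)] by simp
  have qfE_lbm: "qf (E k j) x \<ge> exp (real k * m j)" if "j < n" "norm x = 1" for k j x
    using sf_qf_bounds[OF sfE[OF that(1)] that(2)] by simp
  have unit: "norm (u j) = 1" "norm (v j) = 1" if "j < n" for j using sf_ON[OF sfE[OF that, of 0]] by auto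
  have qf_ge_term: "qf (S k) x \<ge> qf (E k j) x" if "j < n" for k j x
    unfolding qfS by (rule member_le_sum) (use that qfE_nonneg in auto)
  have s1_lb: "s1 k \<ge> exp (real k * \<Lambda>)" for k
  proof -
    have "qf (E k i) (u i) = exp (real k * \<Lambda>)" using sf_qf_u[OF sfE[OF i_lt]] li by simp
    then have "qf (S k) (u i) \<ge> exp (real k * \<Lambda>)" using qf_ge_term[OF i_lt, of k "u i"] by simp
    then show ?thesis using sf_qf_bounds[OF sfS unit(1)[OF i_lt], of k] by simp
  qed
  have tr: "s1 k + s2 k = (\<Sum>j<n. exp (real k * l j) + exp (real k * m j))" for k
  proof -
    have "s1 k + s2 k = qf (S k) (vector [1,0]) + qf (S k) (vector [0,1])" using sf_trace[OF sfS] by simp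
    also have "\<dots> = (\<Sum>j<n. qf (E k j) (vector [1,0]) + qf (E k j) (vector [0,1]))" unfolding qfS by (simp add: sum.distrib)
    also have "\<dots> = (\<Sum>j<n. exp (real k * l j) + exp (real k * m j))"
      by (intro sum.cong refl) (use sf_trace[OF sfE] in auto)
    finally show ?thesis .
  qed
  obtain c0 where c0: "c0 > 0" "\<And>k x. norm x = 1 \<Longrightarrow> qf (S k) x \<ge> c0 * exp (real k * \<nu>)"
  proof (cases "\<nu> = m i")
    case True
    show ?thesis
    proof (rule that[of 1])
      fix k and x :: "real^2" assume "norm x = 1"
      then show "qf (S k) x \<ge> 1 * exp (real k * \<nu>)" using qf_ge_term[OF i_lt] qfE_lbm[OF i_lt] True
        by (metis mult_1 order_trans)
    qed simp
  next
    case False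
    then obtain j where j: "j < n" "j \<noteq> i" "l j = \<nu>" using nucase by auto
    define cr where "cr = (u i$1*u j$2 - u i$2*u j$1)"
    have cr0: "cr \<noteq> 0" unfolding cr_def using nonaligned_cross[OF unit(1)[OF i_lt] unit(1)[OF j(1)]] gen i_lt j by auto
    show ?thesis
    proof (rule that[of "cr^2/2"])
      show "cr^2/2 > 0" using cr0 by simp
      fix k and x :: "real^2" assume x: "norm x = 1"
      have "qf (S k) x = (\<Sum>j<n. qf (E k j) x)" by (rule qfS)
      also have "\<dots> \<ge> (\<Sum>j'\<in>{i,j}. qf (E k j') x)"
        by (rule sum_mono2) (use i_lt j qfE_nonneg in auto)
      finally have "qf (S k) x \<ge> qf (E k i) x + qf (E k j) x" using j(2) by simp
      moreover have "qf (E k i) x \<ge> exp (real k * \<nu>) * (u i \<bullet> x)^2"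
      proof -
        have "exp (real k * \<nu>) \<le> exp (real k * l i)" using nuL li by (simp add: mult_left_mono)
        then have "exp (real k * \<nu>) * (u i \<bullet> x)^2 \<le> exp (real k * l i) * (u i \<bullet> x)^2" by (simp add: mult_right_mono)
        then show ?thesis using qfE_lb[OF i_lt] by (metis order_trans)
      qed
      moreover have "qf (E k j) x \<ge> exp (real k * \<nu>) * (u j \<bullet> x)^2" using qfE_lb[OF j(1)] j(3) by simp
      moreover have "cr^2/2 \<le> (u i \<bullet> x)^2 + (u j \<bullet> x)^2"
        unfolding cr_def by (rule cross_bound[OF unit(1)[OF i_lt] unit(1)[OF j(1)] x])
      then have "cr^2/2 * exp (real k * \<nu>) \<le> exp (real k * \<nu>) * ((u i \<bullet> x)^2 + (u j \<bullet> x)^2)"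
        by (simp add: mult.commute mult_left_mono)
      ultimately show "qf (S k) x \<ge> cr^2/2 * exp (real k * \<nu>)" by (simp add: distrib_left)
    qed
  qed
  have s2_lb: "s2 k \<ge> c0 * exp (real k * \<nu>)" for k
    using c0(2)[OF sf_ON(2)[OF sfS]] sf_qf_v[OF sfS] by metis
  have s2_pos: "s2 k > 0" for k using s2_lb[of k] c0(1) by (smt (verit) exp_gt_zero mult_pos_pos)
  have s2_ub: "s2 k \<le> real n * exp (real k * \<nu>)" for k
  proof -
    have "s2 k \<le> qf (S k) (v i)" using sf_qf_bounds[OF sfS unit(2)[OF i_lt]] by simp
    also have "\<dots> = (\<Sum>j<n. qf (E k j) (v i))" by (rule qfS)
    also have "\<dots> \<le> (\<Sum>j<n. exp (real k * \<nu>))"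
    proof (rule sum_mono)
      fix j assume "j \<in> {..<n}"
      then have j: "j < n" by simp
      show "qf (E k j) (v i) \<le> exp (real k * \<nu>)"
      proof (cases "j = i")
        case True
        then show ?thesis using sf_qf_v[OF sfE[OF j]] mi by (simp add: mult_left_mono)
      next
        case False
        have "exp (real k * l j) \<le> exp (real k * \<nu>)" using lnu[OF j False] by (simp add: mult_left_mono)
        then show ?thesis using qfE_ub[OF j unit(2)[OF i_lt], of k] by linarith
      qed
    qed
    finally show ?thesis by simp
  qed
  have sum_ub: "(\<Sum>j<n. exp (real k * l j) + exp (real k * m j)) \<le> (2 * real n) * exp (real k * \<Lambda>)" for k
  proof -
    have "(\<Sum>j<n. exp (real k * l j) + exp (real k * m j)) \<le> (\<Sum>j<n. 2 * exp (real k * \<Lambda>))"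
    proof (rule sum_mono)
      fix j assume "j \<in> {..<n}"
      then have "l j \<le> \<Lambda>" "m j \<le> \<Lambda>" using lj mle by (auto intro: order_trans)
      then show "exp (real k * l j) + exp (real k * m j) \<le> 2 * exp (real k * \<Lambda>)"
        by (smt (verit) exp_le_cancel_iff mult_left_mono of_nat_0_le_iff)
    qed
    then show ?thesis by simp
  qed
  have s1_ub: "s1 k \<le> (2 * real n) * exp (real k * \<Lambda>)" for k using tr[of k] sum_ub[of k] s2_pos[of k] by linarith
  have L1: "(\<lambda>k. ln (s1 k) / real k) \<longlonglongrightarrow> \<Lambda>"
    by (rule log_squeeze[of 1 "2 * real n"]) (use n s1_lb s1_ub in auto)
  have L2: "(\<lambda>k. ln (s2 k) / real k) \<longlonglongrightarrow> \<nu>"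
    by (rule log_squeeze[of c0 "real n"]) (use n c0 s2_lb s2_ub in auto)
  have T: "(1 / real k) *\<^sub>R mat_log (\<Sum>j<n. mat_exp (real k *\<^sub>R Y j)) =
      (ln (s2 k) / real k) *\<^sub>R mat 1 + ((ln (s1 k) / real k) - (ln (s2 k) / real k)) *\<^sub>R outer2 (w k) (w k)" for k
  proof -
    have eq: "mat_log (S k) = ln (s2 k) *\<^sub>R mat 1 + (ln (s1 k) - ln (s2 k)) *\<^sub>R outer2 (w k) (w k)"
      unfolding mat_log_def using mat_fun_sf[OF sfS] sf_fun_val[OF sfS] by simp
    have c1: "1 / real k * ln (s2 k) = ln (s2 k) / real k" by simp
    have c2: "1 / real k * (ln (s1 k) - ln (s2 k)) = ln (s1 k) / real k - ln (s2 k) / real k"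
      by (simp add: diff_divide_distrib)
    show ?thesis unfolding SE eq scaleR_add_right scaleR_scaleR c1 c2 ..
  qed
  show ?thesis
    unfolding T G
  proof (rule tendsto_add)
    show "(\<lambda>k. (ln (s2 k) / real k) *\<^sub>R (mat 1::mat2)) \<longlonglongrightarrow> \<nu> *\<^sub>R (mat 1::mat2)"
      by (rule tendsto_scaleR[OF L2 tendsto_const])
    show "(\<lambda>k. (ln (s1 k) / real k - ln (s2 k) / real k) *\<^sub>R outer2 (w k) (w k)) \<longlonglongrightarrow> (\<Lambda> - \<nu>) *\<^sub>R outer2 (u i) (u i)"
    proof (cases "\<nu> = \<Lambda>")
      case True
      have "(\<lambda>k. ln (s1 k) / real k - ln (s2 k) / real k) \<longlonglongrightarrow> 0" using tendsto_diff[OF L1 L2] True by simp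
      from bounded_null_outer[OF this, of w] sf_ON(1)[OF sfS] show ?thesis using True by simp
    next
      case False
      then have gap: "\<nu> < \<Lambda>" using nuL by simp
      have P: "(\<lambda>k. outer2 (w k) (w k)) \<longlonglongrightarrow> outer2 (u i) (u i)"
      proof -
        define e where "e = (\<lambda>k::nat. exp (real k * (- \<Lambda>)))"
        have ee: "e k * exp (real k * a) = exp (real k * (a - \<Lambda>))" for k a
          unfolding e_def by (simp add: exp_add[symmetric] algebra_simps)
        have lim0: "(\<lambda>k::nat. exp (real k * (a - \<Lambda>))) \<longlonglongrightarrow> 0" if "a < \<Lambda>" for a
          by (rule exp_neg_lim) (use that in simp)
        have limi: "(\<lambda>k::nat. exp (real k * (l j - \<Lambda>))) \<longlonglongrightarrow> (if j = i then 1 else 0)" if "j < n" for j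
        proof (cases "j = i")
          case True then show ?thesis using li by simp
        next
          case False then show ?thesis using lim0[of "l j"] lnu[OF that False] gap by simp
        qed
        have limm: "(\<lambda>k::nat. exp (real k * (m j - \<Lambda>))) \<longlonglongrightarrow> 0" if "j < n" for j
        proof (cases "j = i")
          case True then show ?thesis using lim0[of "m j"] mi gap by simp
        next
          case False then show ?thesis using lim0[of "m j"] lnu[OF that False] mle[OF that] gap by simp
        qed
        have eS: "e k *\<^sub>R S k = (\<Sum>j<n. exp (real k * (l j - \<Lambda>)) *\<^sub>R outer2 (u j) (u j) +
            exp (real k * (m j - \<Lambda>)) *\<^sub>R outer2 (v j) (v j))" for k
          unfolding S_def E_def scaleR_sum_right scaleR_add_right scaleR_scaleR ee ..
        have "(\<lambda>k. e k *\<^sub>R S k) \<longlonglongrightarrow> (\<Sum>j<n. (if j = i then 1 else 0) *\<^sub>R outer2 (u j) (u j) + 0 *\<^sub>R outer2 (v j) (v j))"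
          unfolding eS by (intro tendsto_sum tendsto_add tendsto_scaleR limi limm tendsto_const) auto
        then have LS: "(\<lambda>k. e k *\<^sub>R S k) \<longlonglongrightarrow> outer2 (u i) (u i)"
          using i_lt by (simp add: if_distrib[of "\<lambda>c. c *\<^sub>R _"] cong: if_cong)
        have etr: "e k * (s1 k + s2 k) = (\<Sum>j<n. exp (real k * (l j - \<Lambda>)) + exp (real k * (m j - \<Lambda>)))" for k
          unfolding tr sum_distrib_left distrib_left ee ..
        have "(\<lambda>k. e k * (s1 k + s2 k)) \<longlonglongrightarrow> (\<Sum>j<n. (if j = i then 1 else 0) + 0)"
          unfolding etr by (intro tendsto_sum tendsto_add limi limm) auto
        then have Ltr: "(\<lambda>k. e k * (s1 k + s2 k)) \<longlonglongrightarrow> 1" using i_lt by simp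
        have Ls2: "(\<lambda>k. e k * s2 k) \<longlonglongrightarrow> 0"
        proof (rule tendsto_sandwich[where f = "\<lambda>k. 0" and h = "\<lambda>k. real n * exp (real k * (\<nu> - \<Lambda>))"])
          show "\<forall>\<^sub>F k in sequentially. 0 \<le> e k * s2 k" using s2_pos by (simp add: e_def less_imp_le)
          show "\<forall>\<^sub>F k in sequentially. e k * s2 k \<le> real n * exp (real k * (\<nu> - \<Lambda>))"
          proof (intro always_eventually allI)
            fix k
            have "e k * s2 k \<le> e k * (real n * exp (real k * \<nu>))" using s2_ub[of k] by (simp add: e_def)
            also have "\<dots> = real n * exp (real k * (\<nu> - \<Lambda>))" using ee[of k \<nu>] by (simp add: algebra_simps)
            finally show "e k * s2 k \<le> real n * exp (real k * (\<nu> - \<Lambda>))" .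
          qed
          show "(\<lambda>k. real n * exp (real k * (\<nu> - \<Lambda>))) \<longlonglongrightarrow> 0"
            using tendsto_mult[OF tendsto_const lim0[OF gap]] by simp
        qed simp
        have Ld: "(\<lambda>k. e k * s1 k - e k * s2 k) \<longlonglongrightarrow> 1"
          using tendsto_diff[OF tendsto_diff[OF Ltr Ls2] Ls2] by (simp add: algebra_simps)
        then have ev: "\<forall>\<^sub>F k in sequentially. e k * s1 k - e k * s2 k > 0"
          by (rule order_tendstoD) simp
        have lim: "(\<lambda>k. (1 / (e k * s1 k - e k * s2 k)) *\<^sub>R (e k *\<^sub>R S k - (e k * s2 k) *\<^sub>R mat 1))
            \<longlonglongrightarrow> (1 / 1) *\<^sub>R (outer2 (u i) (u i) - 0 *\<^sub>R mat 1)"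
          by (intro tendsto_scaleR tendsto_divide tendsto_diff Ld LS Ls2 tendsto_const) auto
        show ?thesis
        proof (rule Lim_transform_eventually[OF _ ev[THEN eventually_mono]])
          show "(\<lambda>k. (1 / (e k * s1 k - e k * s2 k)) *\<^sub>R (e k *\<^sub>R S k - (e k * s2 k) *\<^sub>R mat 1))
            \<longlonglongrightarrow> outer2 (u i) (u i)" using lim by simp
        next
          fix k assume pos: "e k * s1 k - e k * s2 k > 0"
          have epos: "e k > 0" by (simp add: e_def)
          have ne: "s1 k \<noteq> s2 k" using pos by auto
          have "outer2 (w k) (w k) = (1/(s1 k - s2 k)) *\<^sub>R (S k - s2 k *\<^sub>R mat 1)" by (rule sf_outer_u[OF sfS ne])
          also have "\<dots> = (1 / (e k * s1 k - e k * s2 k)) *\<^sub>R (e k *\<^sub>R S k - (e k * s2 k) *\<^sub>R mat 1)"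
          proof -
            have m1: "e k *\<^sub>R S k - (e k * s2 k) *\<^sub>R mat 1 = e k *\<^sub>R (S k - s2 k *\<^sub>R mat 1)"
              by (simp add: scaleR_diff_right)
            have m2: "1 / (e k * s1 k - e k * s2 k) * e k = 1/(s1 k - s2 k)"
              using epos by (simp add: right_diff_distrib[symmetric])
            show ?thesis unfolding m1 scaleR_scaleR m2 ..
          qed
          finally show "(1 / (e k * s1 k - e k * s2 k)) *\<^sub>R (e k *\<^sub>R S k - (e k * s2 k) *\<^sub>R mat 1) = outer2 (w k) (w k)" by simp
        qed
      qed
      show ?thesis by (rule tendsto_scaleR[OF tendsto_diff[OF L1 L2] P])
    qed
  qed
qed




lemma sup_LE_generic:
  assumes "n > 0" "\<forall>j<n. spectral_form (Y j) (l j) (m j) (u j) (v j)"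
    "\<forall>i<n. \<forall>j<n. i \<noteq> j \<longrightarrow> \<not> aligned (u i) (u j)"
  shows "sup_LE n Y = Gf l m n Y"
  unfolding sup_LE_def by (rule limI[OF main_generic[OF assms]])

lemma mat_log_zero: "mat_log 0 = 0"
proof -
  have sf: "spectral_form (0::mat2) 0 0 (vector [1,0]) (vector [0,1])"
    unfolding spectral_form_def by (simp add: norm1_iff inner2)
  show ?thesis unfolding mat_log_def using mat_fun_sf[OF sf, of ln] by simp
qed

lemma sup_LE_zero: "sup_LE 0 Y = 0"
  unfolding sup_LE_def by (simp add: mat_log_zero limI)

lemma psd2_qf: "psd2 M \<longleftrightarrow> sym2 M \<and> (\<forall>x. 0 \<le> qf M x)"
  by (simp add: psd2_def qf_def)

lemma loewner_zero_bounds: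
  assumes "c \<ge> 0"
  shows "loewner_le ((-c) *\<^sub>R mat 1) 0 \<and> loewner_le 0 (c *\<^sub>R mat 1)"
  unfolding loewner_le_def psd2_qf using assms
  by (auto simp: qf_diff qf_scale qf_mat1 sym2_scale sym2_mat1 intro: sym2_diff)

lemma eig_bounds:
  assumes sf: "spectral_form X l m u v"
    and lo: "loewner_le ((-c) *\<^sub>R mat 1) X" and hi: "loewner_le X (c *\<^sub>R mat 1)"
  shows "-c \<le> m \<and> l \<le> c"
proof -
  have uu: "u \<bullet> u = 1" "v \<bullet> v = 1" using sf_ON[OF sf] inner_self_norm1 by auto
  have "0 \<le> qf (X - (-c) *\<^sub>R mat 1) v" using lo unfolding loewner_le_def psd2_qf by blast
  then have "0 \<le> m + c" using sf_qf_v[OF sf] uu by (simp add: qf_diff qf_add qf_scale qf_mat1)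
  moreover have "0 \<le> qf (c *\<^sub>R mat 1 - X) u" using hi unfolding loewner_le_def psd2_qf by blast
  then have "0 \<le> c - l" using sf_qf_u[OF sf] uu by (simp add: qf_diff qf_add qf_scale qf_mat1)
  ultimately show ?thesis by simp
qed

lemma Gf_bounds:
  assumes n: "n > 0" and sf: "\<forall>j<n. spectral_form (X j) (l j) (m j) (u j) (v j)"
    and b: "\<forall>j<n. -c \<le> m j \<and> l j \<le> c"
  shows "loewner_le ((-c) *\<^sub>R mat 1) (Gf l m n X) \<and> loewner_le (Gf l m n X) (c *\<^sub>R mat 1)"
proof -
  define i where "i = idx l n"
  define \<Lambda> where "\<Lambda> = Lam l n"
  define \<nu> where "\<nu> = nu l m n"
  have mle: "\<And>j. j < n \<Longrightarrow> m j \<le> l j" using sf by (simp add: spectral_form_def)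
  have i_lt: "i < n" and li: "l i = \<Lambda>"
    using Lam_facts[OF n, where l=l] unfolding i_def \<Lambda>_def by auto
  have mi: "m i \<le> \<nu>" and nuL: "\<nu> \<le> \<Lambda>"
    using nu_facts[OF n, where m=m and l=l] mle unfolding i_def \<Lambda>_def \<nu>_def by auto
  have sfi: "spectral_form (X i) (l i) (m i) (u i) (v i)" using sf i_lt by simp
  have G: "Gf l m n X = \<nu> *\<^sub>R mat 1 + (\<Lambda> - \<nu>) *\<^sub>R outer2 (u i) (u i)"
    unfolding \<nu>_def \<Lambda>_def
    by (rule Gf_alt[where Y=X and l=l and m=m and u=u and v=v and i=i and n=n, OF sfi])
       (use i_def li mi nuL \<Lambda>_def \<nu>_def in auto)
  have bi: "-c \<le> m i" "l i \<le> c" using b i_lt by auto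
  have ux: "(u i \<bullet> x)^2 \<le> x \<bullet> x" for x using ON_sq[OF sf_ON[OF sfi], of x] zero_le_power2[of "v i \<bullet> x"] by linarith
  have symG: "sym2 (Gf l m n X)" unfolding G by (intro sym2_add sym2_scale sym2_mat1 sym2_outer)
  have qG: "qf (Gf l m n X) x = \<nu> * (x \<bullet> x) + (\<Lambda> - \<nu>) * (u i \<bullet> x)^2" for x
    unfolding G by (simp add: qf_add qf_scale qf_mat1 qf_outer)
  have lo: "0 \<le> qf (Gf l m n X - (-c) *\<^sub>R mat 1) x" for x
  proof -
    have "qf (Gf l m n X - (-c) *\<^sub>R mat 1) x = (\<nu> + c) * (x \<bullet> x) + (\<Lambda> - \<nu>) * (u i \<bullet> x)^2"
      by (simp add: qf_diff qf_add qf_scale qf_mat1 qG algebra_simps)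
    also have "\<dots> \<ge> 0"
    proof -
      have h1: "\<nu> + c \<ge> 0" using mi bi by linarith
      have h2: "\<Lambda> - \<nu> \<ge> 0" using nuL by linarith
      show ?thesis by (rule add_nonneg_nonneg[OF mult_nonneg_nonneg[OF h1 inner_ge_zero] mult_nonneg_nonneg[OF h2 zero_le_power2]])
    qed
    finally show ?thesis .
  qed
  have hi: "0 \<le> qf (c *\<^sub>R mat 1 - Gf l m n X) x" for x
  proof -
    have "qf (c *\<^sub>R mat 1 - Gf l m n X) x = (c - \<nu>) * (x \<bullet> x) - (\<Lambda> - \<nu>) * (u i \<bullet> x)^2"
      by (simp add: qf_diff qf_add qf_scale qf_mat1 qG algebra_simps)
    moreover have "(\<Lambda> - \<nu>) * (u i \<bullet> x)^2 \<le> (\<Lambda> - \<nu>) * (x \<bullet> x)"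
      using nuL ux by (intro mult_left_mono) auto
    moreover have "(c - \<Lambda>) * (x \<bullet> x) \<ge> 0" using bi li by simp
    ultimately show ?thesis by (simp add: algebra_simps)
  qed
  show ?thesis unfolding loewner_le_def psd2_qf
    using lo hi symG by (auto intro: sym2_diff sym2_add sym2_scale sym2_mat1)
qed

lemma Gf_cong:
  assumes "\<forall>j<n. l' j = l j \<and> m' j = m j" and n: "n > 0"
  shows "Gf l' m' n Y = Gf l m n Y"
proof -
  have L: "Lam l' n = Lam l n" unfolding Lam_def using assms by (intro arg_cong[where f=Max] image_cong) auto
  have I: "idx l' n = idx l n" unfolding idx_def L using assms by (metis)
  have ilt: "idx l n < n" using Lam_facts(1)[OF n, of l] by auto
  have N: "nu l' m' n = nu l m n" unfolding nu_def I
    using assms ilt by (intro arg_cong[where f=Max] arg_cong2[where f=insert] image_cong) auto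
  show ?thesis unfolding Gf_def L I N using assms ilt by simp
qed




definition rot :: "real \<Rightarrow> real^2 \<Rightarrow> real^2" where
  "rot t x = (\<chi> i. if i = 1 then cos t * x$1 - sin t * x$2 else sin t * x$1 + cos t * x$2)"

lemma rot1: "rot t x $ 1 = cos t * x$1 - sin t * x$2" by (simp add: rot_def)
lemma rot2: "rot t x $ 2 = sin t * x$1 + cos t * x$2" by (simp add: rot_def)

lemma rot_inner: "rot t x \<bullet> rot t y = x \<bullet> y"
proof -
  have "rot t x \<bullet> rot t y = ((sin t)^2 + (cos t)^2) * (x$1*y$1 + x$2*y$2)"
    unfolding inner2 rot1 rot2 by algebra
  then show ?thesis by (simp add: inner2)
qed

lemma rot_norm: "norm (rot t x) = norm x"
  by (simp add: norm_eq_sqrt_inner rot_inner)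

definition cr :: "real^2 \<Rightarrow> real^2 \<Rightarrow> real" where "cr x y = x$1*y$2 - x$2*y$1"

lemma cr_rot: "cr (rot a x) (rot b y) = cos (b - a) * cr x y + sin (b - a) * (x \<bullet> y)"
  unfolding cr_def rot1 rot2 inner2 cos_diff sin_diff by algebra

lemma aligned_cr: "aligned x y \<Longrightarrow> cr x y = 0"
  unfolding aligned_def cr_def by (auto simp: algebra_simps)

lemma cr_dot: "norm x = 1 \<Longrightarrow> norm y = 1 \<Longrightarrow> (cr x y)^2 + (x \<bullet> y)^2 = 1"
proof -
  assume a: "norm x = 1" "norm y = 1"
  have "(cr x y)^2 + (x \<bullet> y)^2 = ((x$1)^2 + (x$2)^2) * ((y$1)^2 + (y$2)^2)"
    unfolding cr_def inner2 by algebra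
  then show ?thesis using a by (simp add: norm1_iff)
qed

lemma rot_tendsto:
  fixes f :: "'a \<Rightarrow> real"
  assumes "(f \<longlongrightarrow> 0) F"
  shows "((\<lambda>z. rot (f z) x) \<longlongrightarrow> x) F"
proof (rule vec_tendstoI)
  fix i :: 2
  have cf: "((\<lambda>z. cos (f z)) \<longlongrightarrow> cos 0) F" by (rule isCont_tendsto_compose[OF isCont_cos assms])
  have sf: "((\<lambda>z. sin (f z)) \<longlongrightarrow> sin 0) F" by (rule isCont_tendsto_compose[OF isCont_sin assms])
  have t1: "((\<lambda>z. cos (f z) * x$1 - sin (f z) * x$2) \<longlongrightarrow> cos 0 * x$1 - sin 0 * x$2) F"
    by (intro tendsto_intros cf sf)
  have t2: "((\<lambda>z. sin (f z) * x$1 + cos (f z) * x$2) \<longlongrightarrow> sin 0 * x$1 + cos 0 * x$2) F"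
    by (intro tendsto_intros cf sf)
  show "((\<lambda>z. rot (f z) x $ i) \<longlongrightarrow> x $ i) F"
  proof -
    have "i = 1 \<or> i = 2" by (rule exhaust_2)
    then show ?thesis using t1 t2 by (auto simp: rot1 rot2)
  qed
qed

lemma outer_tendsto:
  assumes "(f \<longlongrightarrow> a) F"
  shows "((\<lambda>z. outer2 (f z) (f z)) \<longlongrightarrow> outer2 a a) F"
proof (intro vec_tendstoI)
  fix i j :: 2
  show "((\<lambda>z. outer2 (f z) (f z) $ i $ j) \<longlongrightarrow> outer2 a a $ i $ j) F"
    using tendsto_mult[OF tendsto_vec_nth[OF assms, of i] tendsto_vec_nth[OF assms, of j]] by simp
qed

lemma pair_good:
  fixes x y :: "real^2"
  assumes x: "norm x = 1" and y: "norm y = 1" and ij: "i \<noteq> j" "i < n" "j < n"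
  shows "\<forall>\<^sub>F t in at_right (0::real). cr (rot (real i * t) x) (rot (real j * t) y) \<noteq> 0"
proof -
  have eq: "cr (rot (real i * t) x) (rot (real j * t) y) = cos ((real j - real i) * t) * cr x y + sin ((real j - real i) * t) * (x \<bullet> y)" for t
    unfolding cr_rot by (simp add: left_diff_distrib)
  show ?thesis
  proof (cases "cr x y = 0")
    case False
    have "((\<lambda>t. cos ((real j - real i) * t) * cr x y + sin ((real j - real i) * t) * (x \<bullet> y)) \<longlongrightarrow>
        cos ((real j - real i) * 0) * cr x y + sin ((real j - real i) * 0) * (x \<bullet> y)) (at_right 0)"
      by (intro tendsto_intros)
    then have "((\<lambda>t. cos ((real j - real i) * t) * cr x y + sin ((real j - real i) * t) * (x \<bullet> y)) \<longlongrightarrow> cr x y) (at_right 0)"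
      by simp
    from tendsto_imp_eventually_ne[OF this False] show ?thesis unfolding eq .
  next
    case True
    then have d: "x \<bullet> y \<noteq> 0" using cr_dot[OF x y] by auto
    have npos: "real n > 0" using ij by simp
    have ev: "\<forall>\<^sub>F t in at_right (0::real). 0 < t \<and> t < pi / real n"
      unfolding eventually_at_right_field using npos by (intro exI[of _ "pi / real n"]) auto
    show ?thesis
    proof (rule eventually_mono[OF ev])
      fix t :: real assume t: "0 < t \<and> t < pi / real n"
      define a where "a = (real j - real i) * t"
      have tn: "real n * t < pi" using t npos by (simp add: field_simps)
      have "sin a \<noteq> 0"
      proof (cases "i < j")
        case True
        then have "0 < a" using t unfolding a_def by simp
        moreover have "a < pi"
        proof -
          have "real j - real i \<le> real n" using ij by simp
          then have "a \<le> real n * t" unfolding a_def using t by (simp add: mult_right_mono)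
          then show ?thesis using tn by simp
        qed
        ultimately show ?thesis using sin_gt_zero by fastforce
      next
        case False
        then have ji: "j < i" using ij by simp
        have "real j - real i < 0" using ji by simp
        then have "a < 0" unfolding a_def using t mult_neg_pos by blast
        then have "0 < -a" by simp
        moreover have "-a < pi"
        proof -
          have "real i - real j \<le> real n" using ij by simp
          then have "(real i - real j) * t \<le> real n * t" using t by (intro mult_right_mono) auto
          moreover have "-a = (real i - real j) * t" unfolding a_def by (simp add: algebra_simps)
          ultimately have "-a \<le> real n * t" by simp
          then show ?thesis using tn by simp
        qed
        ultimately have "sin (-a) > 0" using sin_gt_zero by blast
        then show ?thesis by simp
      qed
      then show "cr (rot (real i * t) x) (rot (real j * t) y) \<noteq> 0"
        unfolding eq True using d a_def by simp
    qed
  qed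
qed




lemma perturb_exists:
  assumes sf: "\<forall>j<n. spectral_form (X j) (l j) (m j) (u j) (v j)"
  shows "\<exists>XD. converges_planar n XD X \<and> (\<forall>d>0. generic_bases n (XD d))"
proof -
  have unit: "norm (u j) = 1" "norm (v j) = 1" "u j \<bullet> v j = 0" if "j < n" for j
    using sf_ON[of "X j" "l j" "m j" "u j" "v j"] sf that by auto
  define Good where "Good = (\<lambda>t. \<forall>p\<in>{..<n} \<times> {..<n}. fst p \<noteq> snd p \<longrightarrow>
      cr (rot (real (fst p) * t) (u (fst p))) (rot (real (snd p) * t) (u (snd p))) \<noteq> 0)"
  have "\<forall>\<^sub>F t in at_right (0::real). Good t"
    unfolding Good_def
  proof (intro eventually_ball_finite ballI)
    show "finite ({..<n} \<times> {..<n})" by simp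
    fix p assume p: "p \<in> {..<n} \<times> {..<n}"
    show "\<forall>\<^sub>F t in at_right 0. fst p \<noteq> snd p \<longrightarrow>
      cr (rot (real (fst p) * t) (u (fst p))) (rot (real (snd p) * t) (u (snd p))) \<noteq> 0"
    proof (cases "fst p = snd p")
      case True then show ?thesis by simp
    next
      case False
      have "fst p < n" "snd p < n" using p by auto
      from pair_good[OF unit(1)[OF this(1)] unit(1)[OF this(2)] False this]
      show ?thesis by (rule eventually_mono) simp
    qed
  qed
  then obtain b where b: "b > 0" "\<And>t. 0 < t \<Longrightarrow> t < b \<Longrightarrow> Good t"
    unfolding eventually_at_right_field by auto
  define \<tau> where "\<tau> = (\<lambda>d::real. min d (b/2))"
  define R where "R = (\<lambda>d j. rot (real j * \<tau> d))"
  define XD where "XD = (\<lambda>d j. l j *\<^sub>R outer2 (R d j (u j)) (R d j (u j)) + m j *\<^sub>R outer2 (R d j (v j)) (R d j (v j)))"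
  have sfD: "spectral_form (XD d j) (l j) (m j) (R d j (u j)) (R d j (v j))" if "j < n" for d j
    unfolding spectral_form_def XD_def R_def using unit[OF that] sf that
    by (auto simp: rot_norm rot_inner spectral_form_def)
  have same: "same_eigenvalues (XD d j) (X j)" if "j < n" for d j
    unfolding same_eigenvalues_def
  proof (intro allI iffI)
    fix l' m' assume "\<exists>u' v'. spectral_form (XD d j) l' m' u' v'"
    then obtain u' v' where "spectral_form (XD d j) l' m' u' v'" by blast
    then have "l' = l j \<and> m' = m j" using sf_eig_unique[OF _ sfD[OF that]] by metis
    then show "\<exists>u' v'. spectral_form (X j) l' m' u' v'" using sf that by auto
  next
    fix l' m' assume "\<exists>u' v'. spectral_form (X j) l' m' u' v'"
    then obtain u' v' where "spectral_form (X j) l' m' u' v'" by blast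
    then have "l' = l j \<and> m' = m j" using sf_eig_unique[OF _ sf[rule_format, OF that]] by metis
    then show "\<exists>u' v'. spectral_form (XD d j) l' m' u' v'" using sfD[OF that] by auto
  qed
  have tau0: "(\<tau> \<longlongrightarrow> 0) (at_right 0)"
  proof -
    have "((\<lambda>d. min d (b/2)) \<longlongrightarrow> min 0 (b/2)) (at_right (0::real))"
      by (intro tendsto_min tendsto_ident_at tendsto_const)
    then show ?thesis using b unfolding \<tau>_def by simp
  qed
  have lim: "((\<lambda>d. XD d j) \<longlongrightarrow> X j) (at_right 0)" if "j < n" for j
  proof -
    have t: "((\<lambda>d. real j * \<tau> d) \<longlongrightarrow> 0) (at_right 0)"
      using tendsto_mult[OF tendsto_const tau0, of "real j"] by simp
    have "((\<lambda>d. XD d j) \<longlongrightarrow> l j *\<^sub>R outer2 (u j) (u j) + m j *\<^sub>R outer2 (v j) (v j)) (at_right 0)"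
      unfolding XD_def R_def
      by (intro tendsto_add tendsto_scaleR tendsto_const outer_tendsto rot_tendsto t)
    moreover have "X j = l j *\<^sub>R outer2 (u j) (u j) + m j *\<^sub>R outer2 (v j) (v j)"
      using sf that by (simp add: spectral_form_def)
    ultimately show ?thesis by simp
  qed
  have gen: "generic_bases n (XD d)" if "d > 0" for d
  proof -
    have "0 < \<tau> d" "\<tau> d < b" using that b unfolding \<tau>_def by auto
    then have G: "Good (\<tau> d)" by (rule b(2))
    show ?thesis unfolding generic_bases_def
    proof (intro exI conjI allI impI)
      show "\<And>i. i < n \<Longrightarrow> spectral_form (XD d i) (l i) (m i) (R d i (u i)) (R d i (v i))" by (rule sfD)
      fix i j assume ij: "i < n" "j < n" "i \<noteq> j"
      then have "cr (R d i (u i)) (R d j (u j)) \<noteq> 0" using G unfolding Good_def R_def by auto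
      then show "\<not> aligned (R d i (u i)) (R d j (u j))" using aligned_cr by blast
    qed
  qed
  have "converges_planar n XD X" unfolding converges_planar_def using lim same by auto
  then show ?thesis using gen by blast
qed

lemma limit_family:
  assumes n: "n > 0" and sf: "\<forall>j<n. spectral_form (X j) (l j) (m j) (u j) (v j)"
    and cp: "converges_planar n XD X" and gen: "\<forall>d>0. generic_bases n (XD d)"
  shows "((\<lambda>d. sup_LE n (XD d)) \<longlongrightarrow> Gf l m n X) (at_right 0)"
proof -
  have eq: "sup_LE n (XD d) = Gf l m n (XD d)" if dpos: "d > 0" for d
  proof -
    obtain l' m' u' v' where g: "\<forall>i<n. spectral_form (XD d i) (l' i) (m' i) (u' i) (v' i)"
      "\<forall>i<n. \<forall>j<n. i \<noteq> j \<longrightarrow> \<not> aligned (u' i) (u' j)"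
      using gen dpos unfolding generic_bases_def by blast
    have "\<forall>j<n. l' j = l j \<and> m' j = m j"
    proof (intro allI impI)
      fix j assume j: "j < n"
      have "same_eigenvalues (XD d j) (X j)" using cp dpos j unfolding converges_planar_def by auto
      then obtain u'' v'' where "spectral_form (XD d j) (l j) (m j) u'' v''"
        using sf j unfolding same_eigenvalues_def by blast
      from sf_eig_unique[OF g(1)[rule_format, OF j] this] show "l' j = l j \<and> m' j = m j" .
    qed
    then show ?thesis using sup_LE_generic[OF n g] Gf_cong[OF _ n] by simp
  qed
  have ilt: "idx l n < n" using Lam_facts(1)[OF n, of l] by simp
  have XL: "((\<lambda>d. XD d (idx l n)) \<longlongrightarrow> X (idx l n)) (at_right 0)" using cp ilt unfolding converges_planar_def by auto
  have "((\<lambda>d. Gf l m n (XD d)) \<longlongrightarrow> Gf l m n X) (at_right 0)"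
    unfolding Gf_def by (intro tendsto_add tendsto_scaleR tendsto_diff tendsto_const XL)
  moreover have "\<forall>\<^sub>F d in at_right 0. Gf l m n (XD d) = sup_LE n (XD d)"
    using eventually_at_right_less[of "0::real"] by (rule eventually_mono) (simp add: eq)
  ultimately show ?thesis by (rule Lim_transform_eventually)
qed

theorem corollary3:
  fixes n :: nat and X :: "nat \<Rightarrow> real^2^2"
  assumes "\<forall>i<n. sym2 (X i)"
    and "\<forall>i<n. loewner_le ((- (1 / sqrt 2)) *\<^sub>R mat 1) (X i)
                \<and> loewner_le (X i) ((1 / sqrt 2) *\<^sub>R mat 1)"
  shows "loewner_le ((- (1 / sqrt 2)) *\<^sub>R mat 1) (sup_RLE n X)
       \<and> loewner_le (sup_RLE n X) ((1 / sqrt 2) *\<^sub>R mat 1)"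
proof -
  define c :: real where "c = 1 / sqrt 2"
  have c0: "c \<ge> 0" unfolding c_def by simp
  have bnd: "\<And>j l m u v. j < n \<Longrightarrow> spectral_form (X j) l m u v \<Longrightarrow> -c \<le> m \<and> l \<le> c"
    using assms(2) eig_bounds unfolding c_def by blast
  have "\<forall>j. \<exists>l m u v. j < n \<longrightarrow> spectral_form (X j) l m u v" using spectral_exists assms(1) by blast
  then obtain l m u v where sf0: "\<forall>j. j < n \<longrightarrow> spectral_form (X j) (l j) (m j) (u j) (v j)" by metis
  then have sf: "\<forall>j<n. spectral_form (X j) (l j) (m j) (u j) (v j)" by blast
  have goal: "loewner_le ((-c) *\<^sub>R mat 1) (sup_RLE n X) \<and> loewner_le (sup_RLE n X) (c *\<^sub>R mat 1)"
  proof (cases "n = 0")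
    case True
    have "generic_bases n X" unfolding generic_bases_def True by simp
    then have "sup_RLE n X = 0" unfolding sup_RLE_def True by (simp add: sup_LE_zero)
    then show ?thesis using loewner_zero_bounds[OF c0] by simp
  next
    case False
    then have n: "n > 0" by simp
    show ?thesis
    proof (cases "generic_bases n X")
      case True
      then obtain l' m' u' v' where g: "\<forall>i<n. spectral_form (X i) (l' i) (m' i) (u' i) (v' i)"
        "\<forall>i<n. \<forall>j<n. i \<noteq> j \<longrightarrow> \<not> aligned (u' i) (u' j)"
        unfolding generic_bases_def by blast
      have "sup_RLE n X = Gf l' m' n X" unfolding sup_RLE_def using True sup_LE_generic[OF n g] by simp
      moreover have "\<forall>j<n. -c \<le> m' j \<and> l' j \<le> c" using bnd g(1) by blast
      ultimately show ?thesis using Gf_bounds[OF n g(1)] by simp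
    next
      case False
      let ?P = "\<lambda>L. \<forall>XD. converges_planar n XD X \<and> (\<forall>d>0. generic_bases n (XD d)) \<longrightarrow>
                        ((\<lambda>d. sup_LE n (XD d)) \<longlongrightarrow> L) (at_right 0)"
      have PG: "?P (Gf l m n X)" using limit_family[OF n sf] by blast
      obtain XD0 where XD0: "converges_planar n XD0 X" "\<forall>d>0. generic_bases n (XD0 d)"
        using perturb_exists[OF sf] by blast
      have "(THE L. ?P L) = Gf l m n X"
      proof (rule the_equality)
        show "?P (Gf l m n X)" by (rule PG)
        fix L assume "?P L"
        then have "((\<lambda>d. sup_LE n (XD0 d)) \<longlongrightarrow> L) (at_right 0)" using XD0 by blast
        moreover have "((\<lambda>d. sup_LE n (XD0 d)) \<longlongrightarrow> Gf l m n X) (at_right 0)" using PG XD0 by blast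
        ultimately show "L = Gf l m n X" by (rule tendsto_unique[OF trivial_limit_at_right_real])
      qed
      then have "sup_RLE n X = Gf l m n X" unfolding sup_RLE_def using False by simp
      moreover have "\<forall>j<n. -c \<le> m j \<and> l j \<le> c" using bnd sf by blast
      ultimately show ?thesis using Gf_bounds[OF n sf] by simp
    qed
  qed
  then show ?thesis unfolding c_def by simp
qed


end
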